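(* Let $G$ be a group with a rotary pair $(a,z)$ and let $\Gamma=\mathrm{Cos}(G,\langle a\rangle,\langle z\rangle)=(V,E,\mathbf I)$, of valency $k$ and edge-multiplicity $\lambda$ (so $|a|=k\lambda$). Then: (a) the kernel of the action of $G$ on $V$ is $G_{(V)}=\langle a\rangle\cap\langle a^z\rangle$; (b) $\langle a\rangle\cap\langle az\rangle$ and $\langle a\rangle\cap\langle zz^a\rangle$ are normal subgroups of $G$; (c) if either $|\langle az\rangle:\langle a\rangle\cap\langle az\rangle|\le2$, or $|\langle z,z^a\rangle:\langle a\rangle\cap\langle z,z^a\rangle|\le 2$, then $G=\langle a\rangle\rtimes\langle z\rangle$ and $\Gamma\cong\mathbf K_2^{(\lambda)}$ with $\lambda=|a|$.
   Context: A rotary pair for $G$ is $(a,z)$ with $G=\langle a,z\rangle$, $|a|$ finite, $|z|=2$, $z\notin\langle a\rangle$. $\mathrm{Cos}(G,H,J)$: vertex set $\{Hx:x\in G\}$, edge set $\{Jy:y\in G\}$, $Hx$ incident with $Jy$ iff $yx^{-1}\in JH$, $G$ acting by right multiplication. $\mathbf K_2^{(\lambda)}$: two vertices joined by $\lambda$ edges. *)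

theory Defs
  imports "HOL-Algebra.Algebra"
begin

text \<open>Rotary pair (a,z) for G: G = <a,z>, |a| finite, |z| = 2, z not in <a>.
  (HOL-Algebra's ord is 0 exactly for elements of infinite order.)\<close>
definition rotary_pair :: "('a, 'b) monoid_scheme \<Rightarrow> 'a \<Rightarrow> 'a \<Rightarrow> bool" where
  "rotary_pair G a z \<longleftrightarrow>
     a \<in> carrier G \<and> z \<in> carrier G \<and>
     generate G {a, z} = carrier G \<and>
     group.ord G a > 0 \<and> group.ord G z = 2 \<and>
     z \<notin> generate G {a}"

type_synonym ('v, 'e) incidence_structure = "'v set \<times> 'e set \<times> ('v \<Rightarrow> 'e \<Rightarrow> bool)"

definition coset_graph :: "('a, 'b) monoid_scheme \<Rightarrow> 'a set \<Rightarrow> 'a set \<Rightarrow> ('a set, 'a set) incidence_structure" where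
  "coset_graph G H J =
     (rcosets\<^bsub>G\<^esub> H, rcosets\<^bsub>G\<^esub> J,
      (\<lambda>v e. \<exists>x\<in>carrier G. \<exists>y\<in>carrier G. v = H #>\<^bsub>G\<^esub> x \<and> e = J #>\<^bsub>G\<^esub> y \<and>
              y \<otimes>\<^bsub>G\<^esub> inv\<^bsub>G\<^esub> x \<in> J <#>\<^bsub>G\<^esub> H))"

definition K2_multi :: "nat \<Rightarrow> (nat, nat) incidence_structure" where
  "K2_multi lam = ({0, 1}, {..<lam}, (\<lambda>v e. True))"

definition incidence_iso :: "('v, 'e) incidence_structure \<Rightarrow> ('w, 'f) incidence_structure \<Rightarrow> bool" where
  "incidence_iso \<Gamma> \<Delta> \<longleftrightarrow>
     (case \<Gamma> of (V1, E1, I1) \<Rightarrow> case \<Delta> of (V2, E2, I2) \<Rightarrow>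
       \<exists>f g. bij_betw f V1 V2 \<and> bij_betw g E1 E2 \<and>
             (\<forall>v\<in>V1. \<forall>e\<in>E1. I1 v e \<longleftrightarrow> I2 (f v) (g e)))"

definition vertex_kernel :: "('a, 'b) monoid_scheme \<Rightarrow> 'a set \<Rightarrow> 'a set" where
  "vertex_kernel G H = {g \<in> carrier G. \<forall>v \<in> rcosets\<^bsub>G\<^esub> H. v #>\<^bsub>G\<^esub> g = v}"

definition conj_el :: "('a, 'b) monoid_scheme \<Rightarrow> 'a \<Rightarrow> 'a \<Rightarrow> 'a" where
  "conj_el G x g = inv\<^bsub>G\<^esub> g \<otimes>\<^bsub>G\<^esub> x \<otimes>\<^bsub>G\<^esub> g"

definition index_le :: "('a, 'b) monoid_scheme \<Rightarrow> 'a set \<Rightarrow> 'a set \<Rightarrow> nat \<Rightarrow> bool" where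
  "index_le G A K n \<longleftrightarrow>
     finite (rcosets\<^bsub>G\<lparr>carrier := A\<rparr>\<^esub> K) \<and> card (rcosets\<^bsub>G\<lparr>carrier := A\<rparr>\<^esub> K) \<le> n"

definition internal_semidirect :: "('a, 'b) monoid_scheme \<Rightarrow> 'a set \<Rightarrow> 'a set \<Rightarrow> bool" where
  "internal_semidirect G N K \<longleftrightarrow>
     N \<lhd> G \<and> subgroup K G \<and> N \<inter> K = {\<one>\<^bsub>G\<^esub>} \<and> N <#>\<^bsub>G\<^esub> K = carrier G"

end

theory Submission
  imports Defs
begin


lemma (in group) conj_hom: "g \<in> carrier G \<Longrightarrow> (\<lambda>x. inv g \<otimes> x \<otimes> g) \<in> hom G G"
  apply (rule homI)
   apply (auto simp: m_assoc)
  apply (simp add: m_assoc[symmetric])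
  done

lemma (in group) conj_pow:
  "g \<in> carrier G \<Longrightarrow> x \<in> carrier G \<Longrightarrow> (inv g \<otimes> x \<otimes> g) [^] (k::int) = inv g \<otimes> x [^] k \<otimes> g"
proof -
  assume g: "g \<in> carrier G" and x: "x \<in> carrier G"
  have "(\<lambda>x. inv g \<otimes> x \<otimes> g) (x [^] k) = ((\<lambda>x. inv g \<otimes> x \<otimes> g) x) [^] k"
    by (rule hom_int_pow[OF conj_hom]) (use g x is_group in auto)
  then show ?thesis by simp
qed

lemma (in group) gen1_mem:
  "x \<in> carrier G \<Longrightarrow> y \<in> generate G {x} \<longleftrightarrow> (\<exists>k::int. y = x [^] k)"
  using generate_pow by auto

lemma (in group) gen1_comm:
  assumes "x \<in> carrier G" "y \<in> generate G {x}"
  shows "x \<otimes> y = y \<otimes> x"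
proof -
  obtain k::int where k: "y = x [^] k" using assms gen1_mem by blast
  have "x \<otimes> x [^] k = x [^] (1 + k)" using assms by (simp add: int_pow_mult)
  also have "\<dots> = x [^] (k + 1)" by (simp add: add.commute)
  also have "\<dots> = x [^] k \<otimes> x" using assms by (simp add: int_pow_mult)
  finally show ?thesis using k by simp
qed

lemma (in group) normal_by_gens:
  assumes N: "subgroup N G" and S: "S \<subseteq> carrier G" and gen: "generate G S = carrier G"
    and cl: "\<And>s h. s \<in> S \<Longrightarrow> h \<in> N \<Longrightarrow> s \<otimes> h \<otimes> inv s \<in> N \<and> inv s \<otimes> h \<otimes> s \<in> N"
  shows "N \<lhd> G"
proof -
  define T where "T = {x \<in> carrier G. \<forall>h\<in>N. x \<otimes> h \<otimes> inv x \<in> N \<and> inv x \<otimes> h \<otimes> x \<in> N}"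
  have NC: "\<And>h. h \<in> N \<Longrightarrow> h \<in> carrier G" by (rule subgroup.mem_carrier[OF N])
  have "subgroup T G"
  proof (rule subgroupI)
    show "T \<subseteq> carrier G" unfolding T_def by auto
    have "\<one> \<in> T" unfolding T_def using NC by simp
    then show "T \<noteq> {}" by blast
    fix x assume x: "x \<in> T"
    then have xc: "x \<in> carrier G" unfolding T_def by blast
    have "\<forall>h\<in>N. x \<otimes> h \<otimes> inv x \<in> N \<and> inv x \<otimes> h \<otimes> x \<in> N" using x unfolding T_def by blast
    then have "\<forall>h\<in>N. inv x \<otimes> h \<otimes> inv (inv x) \<in> N \<and> inv (inv x) \<otimes> h \<otimes> inv x \<in> N"
      using xc by simp
    then show "inv x \<in> T" unfolding T_def using xc by blast
  next
    fix x y assume x: "x \<in> T" and y: "y \<in> T"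
    have xc: "x \<in> carrier G" and yc: "y \<in> carrier G" using x y unfolding T_def by auto
    show "x \<otimes> y \<in> T" unfolding T_def
    proof (intro CollectI conjI ballI)
      show "x \<otimes> y \<in> carrier G" using xc yc by simp
      fix h assume h: "h \<in> N"
      have hc: "h \<in> carrier G" using NC h .
      have "x \<otimes> y \<otimes> h \<otimes> inv (x \<otimes> y) = x \<otimes> (y \<otimes> h \<otimes> inv y) \<otimes> inv x"
        using xc yc hc by (simp add: inv_mult_group m_assoc)
      moreover have "y \<otimes> h \<otimes> inv y \<in> N" using y h unfolding T_def by auto
      ultimately show "x \<otimes> y \<otimes> h \<otimes> inv (x \<otimes> y) \<in> N" using x unfolding T_def by auto
      have "inv (x \<otimes> y) \<otimes> h \<otimes> (x \<otimes> y) = inv y \<otimes> (inv x \<otimes> h \<otimes> x) \<otimes> y"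
        using xc yc hc by (simp add: inv_mult_group m_assoc)
      moreover have "inv x \<otimes> h \<otimes> x \<in> N" using x h unfolding T_def by auto
      ultimately show "inv (x \<otimes> y) \<otimes> h \<otimes> (x \<otimes> y) \<in> N" using y unfolding T_def by auto
    qed
  qed
  moreover have "S \<subseteq> T" using S cl unfolding T_def by auto
  ultimately have "carrier G \<subseteq> T" using generate_subgroup_incl gen by metis
  then show ?thesis using N normal_inv_iff unfolding T_def by blast
qed

lemma (in group) cancel1:
  "x \<in> carrier G \<Longrightarrow> y \<in> carrier G \<Longrightarrow> x \<otimes> (inv x \<otimes> y) = y"
  "x \<in> carrier G \<Longrightarrow> y \<in> carrier G \<Longrightarrow> inv x \<otimes> (x \<otimes> y) = y"
  by (simp_all add: m_assoc[symmetric])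

lemma (in group) comm_conj:
  assumes "x \<in> carrier G" "h \<in> carrier G" "x \<otimes> h = h \<otimes> x"
  shows "x \<otimes> h \<otimes> inv x = h" "inv x \<otimes> h \<otimes> x = h"
proof -
  show "x \<otimes> h \<otimes> inv x = h" using assms by (simp add: m_assoc)
  have "inv x \<otimes> h \<otimes> x = inv x \<otimes> (x \<otimes> h)" using assms by (metis inv_closed m_assoc)
  also have "\<dots> = h" using assms(1,2) by (rule cancel1(2))
  finally show "inv x \<otimes> h \<otimes> x = h" .
qed

lemma rcosets_sub:
  "rcosets\<^bsub>G\<lparr>carrier := A\<rparr>\<^esub> K = (\<lambda>x. K #>\<^bsub>G\<^esub> x) ` A"
  by (auto simp: RCOSETS_def r_coset_def)

lemma pigeon3:
  assumes "finite S" "card S \<le> 2" "p \<in> S" "q \<in> S" "r \<in> S"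
  shows "p = q \<or> p = r \<or> q = r"
proof (rule ccontr)
  assume "\<not> ?thesis"
  then have "card {p, q, r} = 3" by auto
  moreover have "card {p, q, r} \<le> card S" using assms by (intro card_mono) auto
  ultimately show False using assms by simp
qed



lemma (in group) main:
  assumes rp: "rotary_pair G a z"
  shows "(vertex_kernel G (generate G {a}) =
            generate G {a} \<inter> generate G {conj_el G a z}) \<and>
         (generate G {a} \<inter> generate G {a \<otimes> z} \<lhd> G) \<and>
         (generate G {a} \<inter> generate G {z \<otimes> conj_el G z a} \<lhd> G) \<and>
         ((index_le G (generate G {a \<otimes> z}) (generate G {a} \<inter> generate G {a \<otimes> z}) 2 \<or>
           index_le G (generate G {z, conj_el G z a})
                      (generate G {a} \<inter> generate G {z, conj_el G z a}) 2) \<longrightarrow>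
          internal_semidirect G (generate G {a}) (generate G {z}) \<and>
          incidence_iso (coset_graph G (generate G {a}) (generate G {z})) (K2_multi (group.ord G a)))"
proof -
  have ac: "a \<in> carrier G" and zc: "z \<in> carrier G" and gen: "generate G {a, z} = carrier G"
    and orda: "ord a > 0" and ordz: "ord z = 2" and znot: "z \<notin> generate G {a}"
    using rp by (auto simp: rotary_pair_def)
  have "z [^] (2::nat) = \<one>" using pow_ord_eq_1[OF zc] ordz by simp
  then have zz: "z \<otimes> z = \<one>" using zc by (simp add: numeral_2_eq_2)
  have invz: "inv z = z" using inv_equality[OF zz zc zc] .
  have zzx: "\<And>x. x \<in> carrier G \<Longrightarrow> z \<otimes> (z \<otimes> x) = x"
    using zz zc by (simp add: m_assoc[symmetric])
  have Sc: "{a, z} \<subseteq> carrier G" using ac zc by auto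
  define H where "H = generate G {a}"
  have sH: "subgroup H G" unfolding H_def using ac by (intro generate_is_subgroup) auto
  have memH: "\<And>y. y \<in> H \<longleftrightarrow> (\<exists>k::int. y = a [^] k)" unfolding H_def using gen1_mem[OF ac] .
  have Hc: "\<And>h. h \<in> H \<Longrightarrow> h \<in> carrier G" by (rule subgroup.mem_carrier[OF sH])
  have commH: "\<And>h. h \<in> H \<Longrightarrow> a \<otimes> h = h \<otimes> a" unfolding H_def using gen1_comm[OF ac] by blast
  have aconj: "\<And>h. h \<in> H \<Longrightarrow> a \<otimes> h \<otimes> inv a = h \<and> inv a \<otimes> h \<otimes> a = h"
    using comm_conj[OF ac Hc commH] by blast
  have zH: "\<And>k::int. z \<otimes> a [^] k \<otimes> z = (z \<otimes> a \<otimes> z) [^] k"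
    using conj_pow[OF zc ac] invz by simp

  define c where "c = conj_el G a z"
  have c_eq: "c = z \<otimes> a \<otimes> z" unfolding c_def conj_el_def using invz by simp
  have cc: "c \<in> carrier G" using c_eq ac zc by simp
  have memHz: "\<And>y. y \<in> generate G {c} \<longleftrightarrow> (\<exists>k::int. y = z \<otimes> a [^] k \<otimes> z)"
    using gen1_mem[OF cc] zH c_eq by simp
  have sHz: "subgroup (generate G {c}) G" using cc by (intro generate_is_subgroup) auto
  have sN0: "subgroup (H \<inter> generate G {c}) G" by (rule subgroups_Inter_pair[OF sH sHz])
  have nN0: "H \<inter> generate G {c} \<lhd> G"
  proof (rule normal_by_gens[OF sN0 Sc gen])
    fix s h assume s: "s \<in> {a, z}" and h: "h \<in> H \<inter> generate G {c}"
    show "s \<otimes> h \<otimes> inv s \<in> H \<inter> generate G {c} \<and> inv s \<otimes> h \<otimes> s \<in> H \<inter> generate G {c}"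
    proof (cases "s = a")
      case True then show ?thesis using aconj h by auto
    next
      case False
      then have sz: "s = z" using s by auto
      obtain i::int where i: "h = a [^] i" using h memH by blast
      obtain j::int where j: "h = z \<otimes> a [^] j \<otimes> z" using h memHz by blast
      have "z \<otimes> h \<otimes> z = a [^] j" using j zc ac by (simp add: m_assoc zzx zz)
      then have "z \<otimes> h \<otimes> z \<in> H" using memH by blast
      moreover have "z \<otimes> h \<otimes> z \<in> generate G {c}" using memHz i by blast
      ultimately show ?thesis using sz invz by simp
    qed
  qed
  have partA: "vertex_kernel G H = H \<inter> generate G {c}"
  proof
    show "vertex_kernel G H \<subseteq> H \<inter> generate G {c}"
    proof
      fix g assume g: "g \<in> vertex_kernel G H"
      then have gc: "g \<in> carrier G" and gk: "\<And>v. v \<in> rcosets H \<Longrightarrow> v #> g = v"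
        unfolding vertex_kernel_def by auto
      have HsubG: "H \<subseteq> carrier G" using Hc by blast
      have "H #> \<one> \<in> rcosets H" by (rule rcosetsI[OF HsubG]) simp
      then have "H #> g = H" using gk HsubG by simp
      then have gH: "g \<in> H" using coset_join1[OF _ gc sH] by blast
      have "H #> z \<in> rcosets H" by (rule rcosetsI[OF HsubG zc])
      then have "H #> z #> g = H #> z" using gk by blast
      then have "H #> (z \<otimes> g) = H #> z" using coset_mult_assoc[OF HsubG zc gc] by simp
      then have "z \<otimes> g \<in> H #> z" using rcos_self[OF _ sH, of "z \<otimes> g"] zc gc by simp
      then have "z \<otimes> g \<otimes> inv z \<in> H" using subgroup.rcos_module_imp[OF sH is_group zc] by blast
      then obtain k::int where k: "z \<otimes> g \<otimes> z = a [^] k" using memH invz by auto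
      have "g = z \<otimes> a [^] k \<otimes> z" using k[symmetric] gc zc by (simp add: m_assoc zzx zz)
      then have "g \<in> generate G {c}" using memHz by blast
      then show "g \<in> H \<inter> generate G {c}" using gH by blast
    qed
  next
    show "H \<inter> generate G {c} \<subseteq> vertex_kernel G H"
    proof
      fix g assume g: "g \<in> H \<inter> generate G {c}"
      have gc: "g \<in> carrier G" using g Hc by blast
      have HsubG: "H \<subseteq> carrier G" using Hc by blast
      have "v #> g = v" if v: "v \<in> rcosets H" for v
      proof -
        obtain x where x: "x \<in> carrier G" "v = H #> x" using v unfolding RCOSETS_def by auto
        have "x \<otimes> g \<otimes> inv x \<in> H \<inter> generate G {c}" using nN0[unfolded normal_inv_iff] x(1) g by blast
        then have m: "x \<otimes> g \<otimes> inv x \<in> H" by blast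
        have "x \<otimes> g = (x \<otimes> g \<otimes> inv x) \<otimes> x" using x gc by (simp add: m_assoc)
        then have "H #> (x \<otimes> g) = (H #> (x \<otimes> g \<otimes> inv x)) #> x"
          using coset_mult_assoc[OF HsubG _ x(1), of "x \<otimes> g \<otimes> inv x"] x gc by simp
        also have "\<dots> = H #> x" using coset_join2[OF _ sH m] x gc by simp
        finally show ?thesis using x coset_mult_assoc[OF HsubG x(1) gc] by simp
      qed
      then show "g \<in> vertex_kernel G H" unfolding vertex_kernel_def using gc by blast
    qed
  qed

  define b where "b = a \<otimes> z"
  have bc: "b \<in> carrier G" unfolding b_def using ac zc by simp
  have sB: "subgroup (generate G {b}) G" using bc by (intro generate_is_subgroup) auto
  have sN1: "subgroup (H \<inter> generate G {b}) G" by (rule subgroups_Inter_pair[OF sH sB])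
  have nN1: "H \<inter> generate G {b} \<lhd> G"
  proof (rule normal_by_gens[OF sN1 Sc gen])
    fix s h assume s: "s \<in> {a, z}" and h: "h \<in> H \<inter> generate G {b}"
    have hc: "h \<in> carrier G" using h Hc by blast
    show "s \<otimes> h \<otimes> inv s \<in> H \<inter> generate G {b} \<and> inv s \<otimes> h \<otimes> s \<in> H \<inter> generate G {b}"
    proof (cases "s = a")
      case True then show ?thesis using aconj h by auto
    next
      case False
      then have sz: "s = z" using s by auto
      have c1: "a \<otimes> h = h \<otimes> a" using commH h by blast
      have c2: "b \<otimes> h = h \<otimes> b" using gen1_comm[OF bc] h by blast
      have "a \<otimes> (z \<otimes> h) = a \<otimes> (h \<otimes> z)"
      proof -
        have "a \<otimes> (z \<otimes> h) = b \<otimes> h" unfolding b_def using ac zc hc by (simp add: m_assoc)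
        also have "\<dots> = h \<otimes> a \<otimes> z" using c2 unfolding b_def using ac zc hc by (simp add: m_assoc)
        also have "\<dots> = a \<otimes> (h \<otimes> z)" using c1 ac zc hc by (simp add: m_assoc[symmetric])
        finally show ?thesis .
      qed
      then have "z \<otimes> h = h \<otimes> z" using l_cancel ac zc hc by (meson m_closed)
      then show ?thesis using comm_conj[OF zc hc] sz h by simp
    qed
  qed

  define w where "w = z \<otimes> conj_el G z a"
  have w_eq: "w = z \<otimes> (inv a \<otimes> z \<otimes> a)" unfolding w_def conj_el_def by simp
  have wc: "w \<in> carrier G" unfolding w_eq using ac zc by simp
  have sW: "subgroup (generate G {w}) G" using wc by (intro generate_is_subgroup) auto
  have sN2: "subgroup (H \<inter> generate G {w}) G" by (rule subgroups_Inter_pair[OF sH sW])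
  have zwz: "z \<otimes> w \<otimes> z = inv w"
  proof -
    have "(z \<otimes> w \<otimes> z) \<otimes> w = \<one>" unfolding w_eq using ac zc
      by (simp add: m_assoc zzx zz cancel1)
    then show ?thesis using inv_equality wc zc by (metis m_closed)
  qed
  have nN2: "H \<inter> generate G {w} \<lhd> G"
  proof (rule normal_by_gens[OF sN2 Sc gen])
    fix s h assume s: "s \<in> {a, z}" and h: "h \<in> H \<inter> generate G {w}"
    have hc: "h \<in> carrier G" using h Hc by blast
    show "s \<otimes> h \<otimes> inv s \<in> H \<inter> generate G {w} \<and> inv s \<otimes> h \<otimes> s \<in> H \<inter> generate G {w}"
    proof (cases "s = a")
      case True then show ?thesis using aconj h by auto
    next
      case False
      then have sz: "s = z" using s by auto
      obtain k::int where k: "h = w [^] k" using h gen1_mem[OF wc] by blast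
      have "z \<otimes> h \<otimes> z = (z \<otimes> w \<otimes> z) [^] k" using conj_pow[OF zc wc, of k] invz k by simp
      also have "\<dots> = inv h" using zwz k wc by (simp add: int_pow_inv)
      finally have "z \<otimes> h \<otimes> z = inv h" .
      moreover have "inv h \<in> H \<inter> generate G {w}" by (rule subgroup.m_inv_closed[OF sN2 h])
      ultimately show ?thesis using sz invz by simp
    qed
  qed

  have partC: "internal_semidirect G H (generate G {z}) \<and>
          incidence_iso (coset_graph G H (generate G {z})) (K2_multi (ord a))"
    if idx: "index_le G (generate G {b}) (H \<inter> generate G {b}) 2 \<or>
           index_le G (generate G {z, conj_el G z a}) (H \<inter> generate G {z, conj_el G z a}) 2"
  proof -
    have HsubG: "H \<subseteq> carrier G" using Hc by blast
    have key: "z \<otimes> a \<otimes> z \<in> H"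
      using idx
    proof
      assume i1: "index_le G (generate G {b}) (H \<inter> generate G {b}) 2"
      define N where "N = H \<inter> generate G {b}"
      have NsubG: "N \<subseteq> carrier G" unfolding N_def using Hc by blast
      have fin: "finite ((\<lambda>x. N #> x) ` generate G {b})" and cd: "card ((\<lambda>x. N #> x) ` generate G {b}) \<le> 2"
        using i1 unfolding index_le_def rcosets_sub N_def by auto
      have "b \<in> generate G {b}" by (rule generate.incl) simp
      moreover have "b \<otimes> b \<in> generate G {b}" using generate.eng[OF \<open>b \<in> generate G {b}\<close> \<open>b \<in> generate G {b}\<close>] .
      moreover have "\<one> \<in> generate G {b}" by (rule generate.one)
      ultimately have "N #> \<one> = N #> b \<or> N #> \<one> = N #> (b \<otimes> b) \<or> N #> b = N #> (b \<otimes> b)"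
        using pigeon3[OF fin cd] by blast
      then have "N #> b = N \<or> N #> (b \<otimes> b) = N \<or> N #> b = N #> (b \<otimes> b)"
        using NsubG by auto
      moreover have "b \<otimes> b \<in> N" if "b \<in> N" using subgroup.m_closed[OF sN1, of b b] that unfolding N_def by simp
      moreover have "b \<in> N" if "N #> b = N #> (b \<otimes> b)"
      proof -
        have "b \<otimes> b \<in> N #> b" using that rcos_self[OF _ sN1, of "b \<otimes> b"] bc unfolding N_def by simp
        then have "b \<otimes> b \<otimes> inv b \<in> N" using subgroup.rcos_module_imp[OF sN1 is_group bc] unfolding N_def by blast
        then show ?thesis using bc by (simp add: m_assoc)
      qed
      ultimately have "b \<otimes> b \<in> N" using coset_join1[OF _ bc sN1] coset_join1[OF _ _ sN1, of "b \<otimes> b"] bc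
        unfolding N_def by auto
      then have bbH: "b \<otimes> b \<in> H" unfolding N_def by blast
      have "inv a \<otimes> (b \<otimes> b) = z \<otimes> a \<otimes> z" unfolding b_def using ac zc by (simp add: m_assoc cancel1)
      moreover have "inv a \<otimes> (b \<otimes> b) \<in> H" 
      proof -
        have "a \<in> H" unfolding H_def by (rule generate.incl) simp
        then have "inv a \<in> H" by (rule subgroup.m_inv_closed[OF sH])
        then show ?thesis by (rule subgroup.m_closed[OF sH _ bbH])
      qed
      ultimately show ?thesis by simp
    next
      assume i2: "index_le G (generate G {z, conj_el G z a}) (H \<inter> generate G {z, conj_el G z a}) 2"
      define d where "d = conj_el G z a"
      have d_eq: "d = inv a \<otimes> z \<otimes> a" unfolding d_def conj_el_def by simp
      have dc: "d \<in> carrier G" unfolding d_eq using ac zc by simp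
      define D where "D = generate G {z, d}"
      have sD: "subgroup D G" unfolding D_def using zc dc by (intro generate_is_subgroup) auto
      define N where "N = H \<inter> D"
      have sN: "subgroup N G" unfolding N_def by (rule subgroups_Inter_pair[OF sH sD])
      have NsubG: "N \<subseteq> carrier G" unfolding N_def using Hc by blast
      have fin: "finite ((\<lambda>x. N #> x) ` D)" and cd: "card ((\<lambda>x. N #> x) ` D) \<le> 2"
        using i2 unfolding index_le_def rcosets_sub N_def D_def d_def by auto
      have zD: "z \<in> D" unfolding D_def by (rule generate.incl) simp
      have dD: "d \<in> D" unfolding D_def by (rule generate.incl) simp
      have oD: "\<one> \<in> D" unfolding D_def by (rule generate.one)
      have "N #> \<one> = N #> z \<or> N #> \<one> = N #> d \<or> N #> z = N #> d"
        using pigeon3[OF fin cd] zD dD oD by blast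
      then have "N #> z = N \<or> N #> d = N \<or> N #> z = N #> d"
        using NsubG by auto
      moreover have "N #> z \<noteq> N"
      proof
        assume "N #> z = N"
        then have "z \<in> N" using coset_join1[OF _ zc sN] by blast
        then show False using znot unfolding N_def H_def by blast
      qed
      moreover have "N #> d \<noteq> N"
      proof
        assume "N #> d = N"
        then have "d \<in> H" using coset_join1[OF _ dc sN] unfolding N_def by blast
        then have "a \<otimes> d \<otimes> inv a \<in> H" using aconj by simp
        moreover have "a \<otimes> d \<otimes> inv a = z" unfolding d_eq using ac zc by (simp add: m_assoc cancel1)
        ultimately show False using znot unfolding H_def by simp
      qed
      ultimately have "N #> z = N #> d" by blast
      then have "d \<in> N #> z" using rcos_self[OF dc sN] by simp
      then have "d \<otimes> inv z \<in> N" using subgroup.rcos_module_imp[OF sN is_group zc] by blast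
      then have dzH: "d \<otimes> z \<in> H" using invz unfolding N_def by simp
      have "a \<otimes> (d \<otimes> z) = z \<otimes> a \<otimes> z" unfolding d_eq using ac zc by (simp add: m_assoc cancel1)
      moreover have "a \<otimes> (d \<otimes> z) \<in> H" 
      proof -
        have "a \<in> H" unfolding H_def by (rule generate.incl) simp
        then show ?thesis by (rule subgroup.m_closed[OF sH _ dzH])
      qed
      ultimately show ?thesis by simp
    qed
    have aH: "a \<in> H" unfolding H_def by (rule generate.incl) simp
    have iaH: "inv a \<in> H" by (rule subgroup.m_inv_closed[OF sH aH])
    have znotH: "z \<notin> H" using znot unfolding H_def .
    have oneH: "\<one> \<in> H" by (rule subgroup.one_closed[OF sH])
    have nH: "H \<lhd> G"
    proof (rule normal_by_gens[OF sH Sc gen])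
      fix s h assume s: "s \<in> {a, z}" and h: "h \<in> H"
      show "s \<otimes> h \<otimes> inv s \<in> H \<and> inv s \<otimes> h \<otimes> s \<in> H"
      proof (cases "s = a")
        case True
        have "a \<otimes> h \<otimes> inv a \<in> H" by (intro subgroup.m_closed[OF sH] aH iaH h)
        moreover have "inv a \<otimes> h \<otimes> a \<in> H" by (intro subgroup.m_closed[OF sH] aH iaH h)
        ultimately show ?thesis using True by simp
      next
        case False
        then have sz: "s = z" using s by auto
        obtain k::int where k: "h = a [^] k" using h memH by blast
        have "z \<otimes> h \<otimes> z = (z \<otimes> a \<otimes> z) [^] k" using zH k by simp
        moreover have "(z \<otimes> a \<otimes> z) [^] k \<in> H" by (rule subgroup_int_pow_closed[OF sH key])
        ultimately show ?thesis using sz invz by simp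
      qed
    qed
    have zhz: "\<And>h. h \<in> H \<Longrightarrow> z \<otimes> h \<otimes> z \<in> H"
      using nH[unfolded normal_inv_iff] zc invz by metis
    define K where "K = generate G {z}"
    have sK2: "subgroup {\<one>, z} G"
    proof (rule subgroupI)
      show "{\<one>, z} \<subseteq> carrier G" using zc by simp
      show "{\<one>, z} \<noteq> {}" by simp
      fix x assume "x \<in> {\<one>, z}" then show "inv x \<in> {\<one>, z}" using invz by auto
    next
      fix x y assume "x \<in> {\<one>, z}" "y \<in> {\<one>, z}" then show "x \<otimes> y \<in> {\<one>, z}" using zz zc by auto
    qed
    have K_eq: "K = {\<one>, z}"
    proof
      show "K \<subseteq> {\<one>, z}" unfolding K_def by (rule generate_subgroup_incl[OF _ sK2]) simp
      show "{\<one>, z} \<subseteq> K" unfolding K_def using generate.one generate.incl[of z "{z}" G] by auto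
    qed
    have sK: "subgroup K G" using sK2 K_eq by simp
    have z1: "z \<noteq> \<one>" using znotH oneH by auto
    define T where "T = {g \<in> carrier G. g \<in> H \<or> g \<otimes> z \<in> H}"
    have sT: "subgroup T G"
    proof (rule subgroupI)
      show "T \<subseteq> carrier G" unfolding T_def by auto
      show "T \<noteq> {}" unfolding T_def using oneH by auto
      fix x assume x: "x \<in> T"
      then have xc: "x \<in> carrier G" unfolding T_def by simp
      show "inv x \<in> T"
      proof (cases "x \<in> H")
        case True then show ?thesis unfolding T_def using subgroup.m_inv_closed[OF sH] xc by simp
      next
        case False
        then have xz: "x \<otimes> z \<in> H" using x unfolding T_def by simp
        have "z \<otimes> (x \<otimes> z) \<otimes> z = z \<otimes> x" using xc zc by (simp add: m_assoc zz)
        then have "z \<otimes> x \<in> H" using zhz[OF xz] by simp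
        then have "inv (z \<otimes> x) \<in> H" by (rule subgroup.m_inv_closed[OF sH])
        then have "inv x \<otimes> z \<in> H" using xc zc invz by (simp add: inv_mult_group)
        then show ?thesis unfolding T_def using xc by simp
      qed
    next
      fix x y assume x: "x \<in> T" and y: "y \<in> T"
      then have xc: "x \<in> carrier G" and yc: "y \<in> carrier G" unfolding T_def by auto
      have mc: "\<And>p q. p \<in> H \<Longrightarrow> q \<in> H \<Longrightarrow> p \<otimes> q \<in> H" by (rule subgroup.m_closed[OF sH])
      have "x \<otimes> y \<in> H \<or> x \<otimes> y \<otimes> z \<in> H"
      proof (cases "x \<in> H")
        case xH: True
        show ?thesis
        proof (cases "y \<in> H")
          case True then show ?thesis using mc xH by simp
        next
          case False
          then have "y \<otimes> z \<in> H" using y unfolding T_def by simp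
          then have "x \<otimes> (y \<otimes> z) \<in> H" using mc xH by simp
          then show ?thesis using xc yc zc by (simp add: m_assoc)
        qed
      next
        case False
        then have xz: "x \<otimes> z \<in> H" using x unfolding T_def by simp
        show ?thesis
        proof (cases "y \<in> H")
          case True
          have "(x \<otimes> z) \<otimes> (z \<otimes> y \<otimes> z) \<in> H" using mc xz zhz[OF True] by simp
          moreover have "(x \<otimes> z) \<otimes> (z \<otimes> y \<otimes> z) = x \<otimes> y \<otimes> z" using xc yc zc by (simp add: m_assoc zzx zz)
          ultimately show ?thesis by simp
        next
          case False
          then have yz: "y \<otimes> z \<in> H" using y unfolding T_def by simp
          have "(x \<otimes> z) \<otimes> (z \<otimes> (y \<otimes> z) \<otimes> z) \<in> H" using mc xz zhz[OF yz] by simp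
          moreover have "(x \<otimes> z) \<otimes> (z \<otimes> (y \<otimes> z) \<otimes> z) = x \<otimes> y" using xc yc zc by (simp add: m_assoc zzx zz)
          ultimately show ?thesis by simp
        qed
      qed
      then show "x \<otimes> y \<in> T" unfolding T_def using xc yc by simp
    qed
    have "{a, z} \<subseteq> T" unfolding T_def using aH zz oneH ac zc by simp
    then have "generate G {a, z} \<subseteq> T" by (rule generate_subgroup_incl[OF _ sT])
    then have cover: "\<And>g. g \<in> carrier G \<Longrightarrow> g \<in> H \<or> g \<otimes> z \<in> H" using gen unfolding T_def by auto
    have HK: "H <#> K = carrier G"
    proof
      show "H <#> K \<subseteq> carrier G" unfolding set_mult_def K_eq using Hc zc by auto
      show "carrier G \<subseteq> H <#> K"
      proof
        fix g assume g: "g \<in> carrier G"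
        show "g \<in> H <#> K"
        proof (cases "g \<in> H")
          case True
          have "g = g \<otimes> \<one>" using g by simp
          then show ?thesis unfolding set_mult_def K_eq using True by blast
        next
          case False
          then have gz: "g \<otimes> z \<in> H" using cover g by blast
          have "g = (g \<otimes> z) \<otimes> z" using g zc by (simp add: m_assoc zz)
          then show ?thesis unfolding set_mult_def K_eq using gz by blast
        qed
      qed
    qed
    have semi: "internal_semidirect G H K"
      unfolding internal_semidirect_def using nH sK HK K_eq oneH znotH by auto
    have HsubG: "H \<subseteq> carrier G" using Hc by blast
    have rcH: "rcosets H = {H, H #> z}"
    proof
      show "rcosets H \<subseteq> {H, H #> z}"
      proof
        fix v assume "v \<in> rcosets H"
        then obtain x where x: "x \<in> carrier G" "v = H #> x" unfolding RCOSETS_def by auto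
        show "v \<in> {H, H #> z}"
        proof (cases "x \<in> H")
          case True then show ?thesis using coset_join2[OF x(1) sH] x by simp
        next
          case False
          then have xz: "x \<otimes> z \<in> H" using cover x by blast
          have "H #> x = H #> ((x \<otimes> z) \<otimes> z)" using x zc by (simp add: m_assoc zz)
          also have "\<dots> = (H #> (x \<otimes> z)) #> z" using coset_mult_assoc[OF HsubG _ zc, of "x \<otimes> z"] x zc by simp
          also have "\<dots> = H #> z" using coset_join2[OF _ sH xz] x zc by simp
          finally show ?thesis using x by simp
        qed
      qed
      have "H #> \<one> \<in> rcosets H" by (rule rcosetsI[OF HsubG]) simp
      moreover have "H #> z \<in> rcosets H" by (rule rcosetsI[OF HsubG zc])
      ultimately show "{H, H #> z} \<subseteq> rcosets H" using HsubG by simp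
    qed
    have neq: "H \<noteq> H #> z" using rcos_self[OF zc sH] znotH by auto
    have cardH: "card H = ord a" unfolding H_def using generate_pow_card[OF ac] by simp
    have finH: "finite H" using cardH orda card_gt_0_iff by metis
    have "finite (H #> z)" unfolding r_coset_def using finH by simp
    then have finG: "finite (carrier G)" using rcosets_part_G[OF sH] rcH finH by (metis Union_insert ccpo_Sup_singleton finite_Un)
    have cRH: "card (rcosets H) = 2" using rcH neq by simp
    have ordG: "order G = 2 * ord a" using lagrange[OF sH] cRH cardH by simp
    have cK: "card K = 2" using K_eq z1 by simp
    have cRK: "card (rcosets K) = ord a" using lagrange[OF sK] cK ordG by simp
    have finRK: "finite (rcosets K)" using cRK orda card_gt_0_iff by metis
    obtain g where g: "bij_betw g (rcosets K) {..<ord a}"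
      using finite_same_card_bij[OF finRK] cRK by (metis card_lessThan finite_lessThan)
    have f: "bij_betw (\<lambda>v. if v = H then (0::nat) else 1) (rcosets H) {0, 1}"
      unfolding rcH bij_betw_def inj_on_def using neq by auto
    have KH: "\<And>c. c \<in> carrier G \<Longrightarrow> c \<in> K <#> H"
    proof -
      fix c assume c: "c \<in> carrier G"
      then have "inv c \<in> H <#> K" using HK by simp
      then obtain h k where hk: "h \<in> H" "k \<in> K" "inv c = h \<otimes> k" unfolding set_mult_def by auto
      have kc: "k \<in> carrier G" using hk(2) K_eq zc by auto
      have hc: "h \<in> carrier G" using Hc hk(1) .
      have "c = inv (inv c)" using c by simp
      also have "\<dots> = inv k \<otimes> inv h" using hk hc kc by (simp add: inv_mult_group)
      finally have "c = inv k \<otimes> inv h" .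
      moreover have "inv k \<in> K" by (rule subgroup.m_inv_closed[OF sK hk(2)])
      moreover have "inv h \<in> H" by (rule subgroup.m_inv_closed[OF sH hk(1)])
      ultimately show "c \<in> K <#> H" unfolding set_mult_def by blast
    qed
    have inc: "\<forall>v\<in>rcosets H. \<forall>e\<in>rcosets K. (\<exists>x\<in>carrier G. \<exists>y\<in>carrier G. v = H #> x \<and> e = K #> y \<and>
              y \<otimes> inv x \<in> K <#> H)"
    proof (intro ballI)
      fix v e assume v: "v \<in> rcosets H" and e: "e \<in> rcosets K"
      obtain x where x: "x \<in> carrier G" "v = H #> x" using v unfolding RCOSETS_def by auto
      obtain y where y: "y \<in> carrier G" "e = K #> y" using e unfolding RCOSETS_def by auto
      have "y \<otimes> inv x \<in> K <#> H" using KH x y by simp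
      then show "\<exists>x\<in>carrier G. \<exists>y\<in>carrier G. v = H #> x \<and> e = K #> y \<and> y \<otimes> inv x \<in> K <#> H"
        using x y by blast
    qed
    have iso: "incidence_iso (coset_graph G H K) (K2_multi (ord a))"
      unfolding incidence_iso_def coset_graph_def K2_multi_def using f g inc by auto
    show ?thesis using semi iso unfolding K_def by simp
  qed

  show ?thesis
    using partA nN1 nN2 partC unfolding H_def c_def b_def w_def by blast
qed


theorem lemma3p5:
  fixes G (structure) and a z
  assumes "group G" and "rotary_pair G a z"
  shows "(vertex_kernel G (generate G {a}) =
            generate G {a} \<inter> generate G {conj_el G a z}) \<and>
         (generate G {a} \<inter> generate G {a \<otimes> z} \<lhd> G) \<and>
         (generate G {a} \<inter> generate G {z \<otimes> conj_el G z a} \<lhd> G) \<and>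
         ((index_le G (generate G {a \<otimes> z}) (generate G {a} \<inter> generate G {a \<otimes> z}) 2 \<or>
           index_le G (generate G {z, conj_el G z a})
                      (generate G {a} \<inter> generate G {z, conj_el G z a}) 2) \<longrightarrow>
          internal_semidirect G (generate G {a}) (generate G {z}) \<and>
          incidence_iso (coset_graph G (generate G {a}) (generate G {z})) (K2_multi (group.ord G a)))"
  using group.main[OF assms(1) assms(2)] by simp

end
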